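(* Let $\mathcal{S}$ be a relational structure admitting an injective unary FA-presentation $(a^*,\phi)$, and let $R$ be a binary relation in the signature of $\mathcal{S}$. Let $R^+$ denote the transitive closure of $R$. Then $\Lambda(R^+,\phi)=\{(u,v)\in a^*\times a^* : (u\phi,v\phi)\in R^+\}$ is regular. Hence $\mathcal{S}$ augmented by the relation $R^+$ is also unary FA-presentable.
   Context: For words $w_1,\dots,w_r$ over a finite alphabet $A$, $\mathrm{conv}(w_1,\dots,w_r)$ is the word over $(A\cup\{\$\})^r$ (with $\$\notin A$) whose $j$-th letter is the tuple of $j$-th letters of the $w_i$, shorter words being padded at the end with $\$$. A relation $X\subseteq (A^* )^r$ is regular if $\{\mathrm{conv}(w_1,\dots,w_r):(w_1,\dots,w_r)\in X\}$ is a regular language. An FA-presentation of a relational structure $\mathcal{S}=(S,R_1,\dots,R_n)$ is a pair $(L,\phi)$ with $L$ a regular language over a finite alphabet and $\phi:L\to S$ surjective such that for every relation $R\in\{=,R_1,\dots,R_n\}$ of arity $r$ the relation $\Lambda(R,\phi)=\{(w_1,\dots,w_r)\in L^r : R(w_1\phi,\dots,w_r\phi)\}$ is regular. It is unary if $L$ is over a one-letter alphabet $\{a\}$; a structure is unary FA-presentable if it admits a unary FA-presentation. An injective unary FA-presentation $(a^*,\phi)$ is one with $L=a^*$ and $\phi$ injective. *)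

theory Defs
  imports Main
begin

(* Since the letter type may be larger than the intended finite alphabet,
   totality is harmless: restricting to / extending from a finite alphabet
   (with a sink state) gives the usual notion for languages over that alphabet. *)
definition regular :: "'s list set \<Rightarrow> bool" where
  "regular L \<longleftrightarrow>
     (\<exists>(Q::nat set) (q0::nat) (\<delta>::nat \<Rightarrow> 's \<Rightarrow> nat) (F::nat set).
        finite Q \<and> q0 \<in> Q \<and> (\<forall>q\<in>Q. \<forall>x. \<delta> q x \<in> Q) \<and> F \<subseteq> Q \<and>
        L = {w. foldl \<delta> q0 w \<in> F})"

(* Convolution of a tuple (list) of words; None plays the role of the padding symbol $. *)
definition conv :: "'a list list \<Rightarrow> 'a option list list" where
  "conv ws = map (\<lambda>j. map (\<lambda>w. if j < length w then Some (w ! j) else None) ws)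
                 [0..<foldr (\<lambda>w m. max (length w) m) ws 0]"

definition regular_rel :: "'a list list set \<Rightarrow> bool" where
  "regular_rel X \<longleftrightarrow> regular (conv ` X)"

(* Lambda(R, phi): r-tuples of words in L whose images satisfy R
   (an r-ary relation on the structure is a set of lists of length r). *)
definition Lambda :: "'c list set \<Rightarrow> ('c list \<Rightarrow> 'b) \<Rightarrow> nat \<Rightarrow> 'b list set \<Rightarrow> 'c list list set" where
  "Lambda L \<phi> r R = {ws. length ws = r \<and> set ws \<subseteq> L \<and> map \<phi> ws \<in> R}"

definition eq_rel :: "'b list set" where
  "eq_rel = {[x, y] | x y. x = y}"

definition rel_structure :: "'b set \<Rightarrow> (nat \<times> 'b list set) list \<Rightarrow> bool" where
  "rel_structure S Rs \<longleftrightarrow>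
     (\<forall>(r, R) \<in> set Rs. R \<subseteq> {xs. length xs = r \<and> set xs \<subseteq> S})"

definition fa_presentation ::
  "'b set \<Rightarrow> (nat \<times> 'b list set) list \<Rightarrow> 'c list set \<Rightarrow> ('c list \<Rightarrow> 'b) \<Rightarrow> bool" where
  "fa_presentation S Rs L \<phi> \<longleftrightarrow>
     (\<exists>\<Sigma>. finite \<Sigma> \<and> L \<subseteq> lists \<Sigma>) \<and> regular L \<and> \<phi> ` L = S \<and>
     regular_rel (Lambda L \<phi> 2 eq_rel) \<and>
     (\<forall>(r, R) \<in> set Rs. regular_rel (Lambda L \<phi> r R))"

(* Unary: words over the one-letter alphabet, modelled as the type unit list. *)
definition unary_fa_presentable :: "'b set \<Rightarrow> (nat \<times> 'b list set) list \<Rightarrow> bool" where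
  "unary_fa_presentable S Rs \<longleftrightarrow>
     (\<exists>(L::unit list set) \<phi>. fa_presentation S Rs L \<phi>)"

definition injective_unary_fa_presentation ::
  "'b set \<Rightarrow> (nat \<times> 'b list set) list \<Rightarrow> (unit list \<Rightarrow> 'b) \<Rightarrow> bool" where
  "injective_unary_fa_presentation S Rs \<phi> \<longleftrightarrow>
     fa_presentation S Rs (UNIV :: unit list set) \<phi> \<and> inj \<phi>"

definition trancl_rel :: "'b list set \<Rightarrow> 'b list set" where
  "trancl_rel R = {[x, y] | x y. (x, y) \<in> {(u, v). [u, v] \<in> R}\<^sup>+}"

end

theory Submission
  imports Defs "HOL-Library.FuncSet"
begin

lemma regular_intro:
  fixes \<delta> :: "'q \<Rightarrow> 's \<Rightarrow> 'q"
  assumes fin: "finite Q" and qi: "qi \<in> Q" and cl: "\<forall>q\<in>Q. \<forall>x. \<delta> q x \<in> Q"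
    and L: "L = {w. foldl \<delta> qi w \<in> F}"
  shows "regular L"
proof -
  obtain enc :: "'q \<Rightarrow> nat" and n where enc: "enc ` Q = {i. i < n}" "inj_on enc Q"
    using finite_imp_inj_to_nat_seg[OF fin] by blast
  define dec where "dec = the_inv_into Q enc"
  have dec: "\<And>q. q \<in> Q \<Longrightarrow> dec (enc q) = q"
    unfolding dec_def using enc(2) by (simp add: the_inv_into_f_f)
  define \<delta>' where "\<delta>' = (\<lambda>i x. enc (\<delta> (dec i) x))"
  have run: "\<And>q. q \<in> Q \<Longrightarrow> foldl \<delta>' (enc q) w = enc (foldl \<delta> q w) \<and> foldl \<delta> q w \<in> Q" for w
  proof (induction w)
    case Nil then show ?case by simp
  next
    case (Cons x w)
    then show ?case using cl dec by (simp add: \<delta>'_def)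
  qed
  have "L = {w. foldl \<delta>' (enc qi) w \<in> enc ` (F \<inter> Q)}"
  proof -
    have "\<And>w. foldl \<delta> qi w \<in> F \<longleftrightarrow> foldl \<delta>' (enc qi) w \<in> enc ` (F \<inter> Q)"
    proof -
      fix w
      have r: "foldl \<delta>' (enc qi) w = enc (foldl \<delta> qi w)" "foldl \<delta> qi w \<in> Q"
        using run[OF qi] by auto
      show "foldl \<delta> qi w \<in> F \<longleftrightarrow> foldl \<delta>' (enc qi) w \<in> enc ` (F \<inter> Q)"
        using r enc(2) by (auto simp: inj_on_image_mem_iff)
    qed
    then show ?thesis using L by auto
  qed
  moreover have "finite (enc ` Q)" using fin by simp
  moreover have "enc qi \<in> enc ` Q" using qi by simp
  moreover have "\<forall>q\<in>enc ` Q. \<forall>x. \<delta>' q x \<in> enc ` Q" using cl dec by (auto simp: \<delta>'_def)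
  moreover have "enc ` (F \<inter> Q) \<subseteq> enc ` Q" by auto
  ultimately show ?thesis unfolding regular_def by blast
qed

definition "LX = [Some (), Some ()]"
definition "LY = [Some (), None]"
definition "LZ = [None, Some ()]"

lemma letters_distinct[simp]: "LX \<noteq> LY" "LX \<noteq> LZ" "LY \<noteq> LZ" "LY \<noteq> LX" "LZ \<noteq> LX" "LZ \<noteq> LY"
  by (auto simp: LX_def LY_def LZ_def)

definition wd :: "nat \<Rightarrow> nat \<Rightarrow> unit option list list" where
  "wd m n = conv [replicate m (), replicate n ()]"

lemma wd_eq: "wd m n = (if m \<le> n then replicate m LX @ replicate (n - m) LZ
                        else replicate n LX @ replicate (m - n) LY)"
proof (rule nth_equalityI)
  show "length (wd m n) = length (if m \<le> n then replicate m LX @ replicate (n - m) LZ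
                        else replicate n LX @ replicate (m - n) LY)"
    by (simp add: wd_def conv_def)
next
  fix i assume "i < length (wd m n)"
  then have i: "i < max m n" by (simp add: wd_def conv_def)
  then show "wd m n ! i = (if m \<le> n then replicate m LX @ replicate (n - m) LZ
                        else replicate n LX @ replicate (m - n) LY) ! i"
    by (auto simp: wd_def conv_def nth_append LX_def LY_def LZ_def)
qed

lemma wd_fst: "length (filter (\<lambda>l. l \<noteq> LZ) (wd m n)) = m"
  by (simp add: wd_eq filter_replicate)
lemma wd_snd: "length (filter (\<lambda>l. l \<noteq> LY) (wd m n)) = n"
  by (simp add: wd_eq filter_replicate)

lemma wd_inj: "wd m n = wd m' n' \<longleftrightarrow> m = m' \<and> n = n'"
  by (metis wd_fst wd_snd)

definition Lg :: "(nat \<times> nat) set \<Rightarrow> unit option list list set" where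
  "Lg E = (\<lambda>(m,n). wd m n) ` E"

lemma in_Lg: "wd m n \<in> Lg E \<longleftrightarrow> (m,n) \<in> E"
  by (auto simp: Lg_def wd_inj)

lemma unit_list_rep: "(u::unit list) = replicate (length u) ()"
  by (induction u) auto

definition Epb :: "(unit list \<Rightarrow> 'b) \<Rightarrow> 'b list set \<Rightarrow> (nat \<times> nat) set" where
  "Epb \<phi> R = {(m,n). [\<phi> (replicate m ()), \<phi> (replicate n ())] \<in> R}"

lemma conv_Lambda: "conv ` Lambda (UNIV :: unit list set) \<phi> 2 R = Lg (Epb \<phi> R)"
proof
  show "conv ` Lambda UNIV \<phi> 2 R \<subseteq> Lg (Epb \<phi> R)"
  proof
    fix w assume "w \<in> conv ` Lambda UNIV \<phi> 2 R"
    then obtain ws where ws: "length ws = 2" "map \<phi> ws \<in> R" "w = conv ws"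
      by (auto simp: Lambda_def)
    then obtain u v where uv: "ws = [u,v]"
      by (metis (no_types, lifting) One_nat_def Suc_1 length_0_conv length_Suc_conv)
    have "w = wd (length u) (length v)"
      using ws uv unit_list_rep[of u] unit_list_rep[of v] by (simp add: wd_def)
    moreover have "(length u, length v) \<in> Epb \<phi> R"
      using ws uv unit_list_rep[of u] unit_list_rep[of v] by (simp add: Epb_def)
    ultimately show "w \<in> Lg (Epb \<phi> R)" by (auto simp: Lg_def)
  qed
next
  show "Lg (Epb \<phi> R) \<subseteq> conv ` Lambda UNIV \<phi> 2 R"
  proof
    fix w assume "w \<in> Lg (Epb \<phi> R)"
    then obtain m n where "w = wd m n" "(m,n) \<in> Epb \<phi> R" by (auto simp: Lg_def)
    then show "w \<in> conv ` Lambda UNIV \<phi> 2 R"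
      by (auto simp: Lambda_def Epb_def wd_def intro!: image_eqI[where x="[replicate m (), replicate n ()]"])
  qed
qed

definition nice :: "nat \<Rightarrow> nat \<Rightarrow> (nat \<times> nat) set \<Rightarrow> bool" where
  "nice T P E \<longleftrightarrow> 0 < P \<and>
     (\<forall>x y. T \<le> x \<longrightarrow> T \<le> y \<longrightarrow> ((x,y) \<in> E \<longleftrightarrow> (x+P, y+P) \<in> E)) \<and>
     (\<forall>x y. x + T \<le> y \<longrightarrow> ((x,y) \<in> E \<longleftrightarrow> (x, y+P) \<in> E)) \<and>
     (\<forall>x y. y + T \<le> x \<longrightarrow> ((x,y) \<in> E \<longleftrightarrow> (x+P, y) \<in> E))"

lemma nice_S1: "nice T P E \<Longrightarrow> T \<le> x \<Longrightarrow> T \<le> y \<Longrightarrow> ((x,y) \<in> E \<longleftrightarrow> (x + c*P, y + c*P) \<in> E)"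
proof (induction c)
  case 0 then show ?case by simp
next
  case (Suc c)
  then have "(x + c*P, y + c*P) \<in> E \<longleftrightarrow> (x + c*P + P, y + c*P + P) \<in> E"
    unfolding nice_def by (metis trans_le_add1)
  then show ?case using Suc by (simp add: add_ac)
qed

lemma nice_S2: "nice T P E \<Longrightarrow> x + T \<le> y \<Longrightarrow> ((x,y) \<in> E \<longleftrightarrow> (x, y + c*P) \<in> E)"
proof (induction c)
  case 0 then show ?case by simp
next
  case (Suc c)
  then have "(x, y + c*P) \<in> E \<longleftrightarrow> (x, y + c*P + P) \<in> E"
    unfolding nice_def by (metis trans_le_add1)
  then show ?case using Suc by (simp add: add_ac)
qed

lemma nice_S3: "nice T P E \<Longrightarrow> y + T \<le> x \<Longrightarrow> ((x,y) \<in> E \<longleftrightarrow> (x + c*P, y) \<in> E)"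
proof (induction c)
  case 0 then show ?case by simp
next
  case (Suc c)
  then have "(x + c*P, y) \<in> E \<longleftrightarrow> (x + c*P + P, y) \<in> E"
    unfolding nice_def by (metis trans_le_add1)
  then show ?case using Suc by (simp add: add_ac)
qed

lemma ev_periodic:
  fixes f :: "'q \<Rightarrow> 'q"
  assumes fin: "finite Q" and cl: "\<forall>q\<in>Q. f q \<in> Q"
  shows "\<exists>t p. 0 < p \<and> (\<forall>n\<ge>t. \<forall>q\<in>Q. (f^^(n+p)) q = (f^^n) q)"
proof -
  have inQ: "\<And>q. q \<in> Q \<Longrightarrow> (f^^n) q \<in> Q" for n
    by (induction n) (auto simp: cl)
  define g where "g n = (\<lambda>q\<in>Q. (f^^n) q)" for n
  have "range g \<subseteq> Q \<rightarrow>\<^sub>E Q" using inQ by (auto simp: g_def)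
  moreover have "finite (Q \<rightarrow>\<^sub>E Q)" using fin by (simp add: finite_PiE)
  ultimately have "finite (range g)" by (rule finite_subset)
  then have "\<not> inj g" using finite_imageD infinite_UNIV_nat by blast
  then obtain i j where ij: "i \<noteq> j" "g i = g j" unfolding inj_def by blast
  then obtain i j where ij: "i < j" "g i = g j"
    by (metis nat_neq_iff)
  have eq: "(f^^i) q = (f^^j) q" if "q \<in> Q" for q
    using fun_cong[OF ij(2), of q] that by (simp add: g_def)
  show ?thesis
  proof (intro exI conjI allI impI ballI)
    show "0 < j - i" using ij by simp
  next
    fix n q assume n: "i \<le> n" and q: "q \<in> Q"
    have e1: "n + (j-i) = (n-i) + j" using n ij by simp
    have "(f^^(n + (j-i))) q = (f^^(n - i)) ((f^^j) q)"
      unfolding e1 funpow_add by simp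
    also have "\<dots> = (f^^(n - i)) ((f^^i) q)" using eq q by simp
    also have "\<dots> = (f^^((n - i) + i)) q"
      unfolding funpow_add by simp
    also have "\<dots> = (f^^n) q" using n by simp
    finally show "(f^^(n + (j-i))) q = (f^^n) q" .
  qed
qed

lemma periodic_mult:
  assumes "\<forall>n\<ge>t. \<forall>q\<in>Q. (f^^(n+p)) q = (f^^n) q" "t \<le> n" "q \<in> Q"
  shows "(f^^(n + c*p)) q = (f^^n) q"
proof (induction c)
  case 0 then show ?case by simp
next
  case (Suc c)
  have "(f^^(n + Suc c * p)) q = (f^^(n + c*p + p)) q" by (simp add: add_ac)
  also have "\<dots> = (f^^(n + c*p)) q" using assms by simp
  finally show ?case using Suc by simp
qed

lemma foldl_replicate: "foldl \<delta> q (replicate n a) = ((\<lambda>q. \<delta> q a)^^n) q"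
  by (induction n arbitrary: q) (simp_all add: funpow_Suc_right del: funpow.simps)

lemma regular_nice:
  assumes "regular (Lg E)"
  shows "\<exists>T P. nice T P E"
proof -
  obtain Q q0 \<delta> F where A: "finite (Q::nat set)" "q0 \<in> Q" "\<forall>q\<in>Q. \<forall>x. \<delta> q x \<in> Q" "F \<subseteq> Q"
     "Lg E = {w. foldl \<delta> q0 w \<in> F}"
    using assms unfolding regular_def by blast
  define fX where "fX = (\<lambda>q. \<delta> q LX)"
  define fY where "fY = (\<lambda>q. \<delta> q LY)"
  define fZ where "fZ = (\<lambda>q. \<delta> q LZ)"
  obtain tX pX where X: "0 < pX" "\<forall>n\<ge>tX. \<forall>q\<in>Q. (fX^^(n+pX)) q = (fX^^n) q"
    using ev_periodic[OF A(1), of fX] A(3) by (auto simp: fX_def)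
  obtain tY pY where Y: "0 < pY" "\<forall>n\<ge>tY. \<forall>q\<in>Q. (fY^^(n+pY)) q = (fY^^n) q"
    using ev_periodic[OF A(1), of fY] A(3) by (auto simp: fY_def)
  obtain tZ pZ where Z: "0 < pZ" "\<forall>n\<ge>tZ. \<forall>q\<in>Q. (fZ^^(n+pZ)) q = (fZ^^n) q"
    using ev_periodic[OF A(1), of fZ] A(3) by (auto simp: fZ_def)
  define T where "T = max tX (max tY tZ)"
  define P where "P = pX * pY * pZ"
  define st where "st m = (fX^^m) q0" for m
  have stQ: "st m \<in> Q" for m
  proof -
    have "\<And>q. q \<in> Q \<Longrightarrow> (fX^^m) q \<in> Q" by (induction m) (auto simp: fX_def A(3))
    then show ?thesis using A(2) by (simp add: st_def)
  qed
  have fin: "q \<in> Q \<Longrightarrow> (f^^n) q \<in> Q" if "\<forall>q\<in>Q. f q \<in> Q" for f q n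
    using that by (induction n) auto
  have up: "(m, m+k) \<in> E \<longleftrightarrow> (fZ^^k) (st m) \<in> F" for m k
  proof -
    have "(m, m+k) \<in> E \<longleftrightarrow> wd m (m+k) \<in> Lg E" by (simp add: in_Lg)
    also have "\<dots> \<longleftrightarrow> (fZ^^k) (st m) \<in> F"
      by (simp add: A(5) wd_eq foldl_replicate st_def fX_def fZ_def)
    finally show ?thesis .
  qed
  have down: "(m+k, m) \<in> E \<longleftrightarrow> (fY^^k) (st m) \<in> F" for m k
  proof -
    have "(m+k, m) \<in> E \<longleftrightarrow> wd (m+k) m \<in> Lg E" by (simp add: in_Lg)
    also have "\<dots> \<longleftrightarrow> (fY^^k) (st m) \<in> F"
      by (cases "k = 0") (simp_all add: A(5) wd_eq foldl_replicate st_def fX_def fY_def)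
    finally show ?thesis .
  qed
  have stP: "st (m + P) = st m" if "T \<le> m" for m
  proof -
    have "(fX^^(m + (pY*pZ)*pX)) q0 = (fX^^m) q0"
      by (rule periodic_mult[OF X(2)]) (use that A(2) in \<open>auto simp: T_def\<close>)
    then show ?thesis by (simp add: st_def P_def mult_ac)
  qed
  have ZP: "(fZ^^(k + P)) q = (fZ^^k) q" if "T \<le> k" "q \<in> Q" for k q
  proof -
    have "(fZ^^(k + (pX*pY)*pZ)) q = (fZ^^k) q"
      by (rule periodic_mult[OF Z(2)]) (use that in \<open>auto simp: T_def\<close>)
    then show ?thesis by (simp add: P_def mult_ac)
  qed
  have YP: "(fY^^(k + P)) q = (fY^^k) q" if "T \<le> k" "q \<in> Q" for k q
  proof -
    have "(fY^^(k + (pX*pZ)*pY)) q = (fY^^k) q"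
      by (rule periodic_mult[OF Y(2)]) (use that in \<open>auto simp: T_def\<close>)
    then show ?thesis by (simp add: P_def mult_ac)
  qed
  have "nice T P E"
    unfolding nice_def
  proof (intro conjI allI impI)
    show "0 < P" using X Y Z by (simp add: P_def)
  next
    fix x y assume xy: "T \<le> x" "T \<le> y"
    show "(x, y) \<in> E \<longleftrightarrow> (x + P, y + P) \<in> E"
    proof (cases "x \<le> y")
      case True
      then obtain k where "y = x + k" using le_Suc_ex by blast
      then show ?thesis using up[of x k] up[of "x+P" k] stP[of x] xy by (simp add: add_ac)
    next
      case False
      define k where "k = x - y"
      have "x = y + k" using False by (simp add: k_def)
      then show ?thesis using down[of y k] down[of "y+P" k] stP[of y] xy by (simp add: add_ac)
    qed
  next
    fix x y assume xy: "x + T \<le> y"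
    define k where "k = y - x"
    have k: "y = x + k" "T \<le> k" using xy by (auto simp: k_def)
    show "(x, y) \<in> E \<longleftrightarrow> (x, y + P) \<in> E"
      using up[of x k] up[of x "k+P"] ZP[OF k(2) stQ[of x]] k by (simp add: add_ac)
  next
    fix x y assume xy: "y + T \<le> x"
    define k where "k = x - y"
    have k: "x = y + k" "T \<le> k" using xy by (auto simp: k_def)
    show "(x, y) \<in> E \<longleftrightarrow> (x + P, y) \<in> E"
      using down[of y k] down[of y "k+P"] YP[OF k(2) stQ[of y]] k by (simp add: add_ac)
  qed
  then show ?thesis by blast
qed

definition cl :: "nat \<Rightarrow> nat \<Rightarrow> nat \<Rightarrow> nat" where
  "cl T P a = (if a < T then a else T + (a - T) mod P)"

lemma cl_decomp: "a = cl T P a + (if a < T then 0 else (a - T) div P) * P"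
  by (simp add: cl_def)

lemma cl_ge: "\<not> a < T \<Longrightarrow> T \<le> cl T P a"
  by (simp add: cl_def)

lemma cl_lt: "0 < P \<Longrightarrow> cl T P a < T + P"
  by (simp add: cl_def)

lemma cl_idem: "0 < P \<Longrightarrow> cl T P (cl T P a) = cl T P a"
  by (simp add: cl_def)

lemma cl_suc: "0 < P \<Longrightarrow> cl T P (cl T P a + 1) = cl T P (a + 1)"
proof (cases "a < T")
  case True then show ?thesis by (simp add: cl_def)
next
  case False
  then have "cl T P a + 1 - T = (a - T) mod P + 1" by (simp add: cl_def)
  moreover have "a + 1 - T = (a - T) + 1" using False by simp
  ultimately show ?thesis using False by (simp add: cl_def mod_Suc_eq)
qed

lemma cl_zero: "cl T P 0 = 0"
  by (simp add: cl_def)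

lemma per_up:
  assumes n: "nice T P E"
  shows "(a, a+b) \<in> E \<longleftrightarrow> (cl T P a, cl T P a + cl T P b) \<in> E"
proof -
  have "(a, a+b) \<in> E \<longleftrightarrow> (cl T P a, cl T P a + b) \<in> E"
  proof (cases "a < T")
    case True then show ?thesis by (simp add: cl_def)
  next
    case False
    have "(cl T P a, cl T P a + b) \<in> E \<longleftrightarrow>
          (cl T P a + ((a - T) div P) * P, cl T P a + b + ((a - T) div P) * P) \<in> E"
      by (rule nice_S1[OF n]) (use cl_ge[OF False, of P] in auto)
    moreover have "cl T P a + ((a - T) div P) * P = a" using cl_decomp[of a T P] False by simp
    ultimately show ?thesis by (simp add: add_ac)
  qed
  also have "\<dots> \<longleftrightarrow> (cl T P a, cl T P a + cl T P b) \<in> E"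
  proof (cases "b < T")
    case True then show ?thesis by (simp add: cl_def)
  next
    case False
    have "(cl T P a, cl T P a + cl T P b) \<in> E \<longleftrightarrow>
          (cl T P a, cl T P a + cl T P b + ((b - T) div P) * P) \<in> E"
      by (rule nice_S2[OF n]) (use cl_ge[OF False, of P] in auto)
    moreover have "cl T P b + ((b - T) div P) * P = b" using cl_decomp[of b T P] False by simp
    ultimately show ?thesis by (simp add: add_ac)
  qed
  finally show ?thesis .
qed

lemma per_down:
  assumes n: "nice T P E"
  shows "(a+b, a) \<in> E \<longleftrightarrow> (cl T P a + cl T P b, cl T P a) \<in> E"
proof -
  have "(a+b, a) \<in> E \<longleftrightarrow> (cl T P a + b, cl T P a) \<in> E"
  proof (cases "a < T")
    case True then show ?thesis by (simp add: cl_def)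
  next
    case False
    have "(cl T P a + b, cl T P a) \<in> E \<longleftrightarrow>
          (cl T P a + b + ((a - T) div P) * P, cl T P a + ((a - T) div P) * P) \<in> E"
      by (rule nice_S1[OF n]) (use cl_ge[OF False, of P] in auto)
    moreover have "cl T P a + ((a - T) div P) * P = a" using cl_decomp[of a T P] False by simp
    ultimately show ?thesis by (simp add: add_ac)
  qed
  also have "\<dots> \<longleftrightarrow> (cl T P a + cl T P b, cl T P a) \<in> E"
  proof (cases "b < T")
    case True then show ?thesis by (simp add: cl_def)
  next
    case False
    have "(cl T P a + cl T P b, cl T P a) \<in> E \<longleftrightarrow>
          (cl T P a + cl T P b + ((b - T) div P) * P, cl T P a) \<in> E"
      by (rule nice_S3[OF n]) (use cl_ge[OF False, of P] in auto)
    moreover have "cl T P b + ((b - T) div P) * P = b" using cl_decomp[of b T P] False by simp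
    ultimately show ?thesis by (simp add: add_ac)
  qed
  finally show ?thesis .
qed

definition step :: "nat \<times> nat \<times> nat \<Rightarrow> unit option list \<Rightarrow> nat \<times> nat \<times> nat" where
  "step s l = (case s of (md, a, b) \<Rightarrow>
     (if md = 0 then (if l = LX then (0, a+1, 0) else if l = LZ then (1, a, 1)
                      else if l = LY then (2, a, 1) else (3, 0, 0))
      else if md = 1 then (if l = LZ then (1, a, b+1) else (3, 0, 0))
      else if md = 2 then (if l = LY then (2, a, b+1) else (3, 0, 0))
      else (3, 0, 0)))"

definition acc :: "(nat \<times> nat) set \<Rightarrow> nat \<times> nat \<times> nat \<Rightarrow> bool" where
  "acc E s = (case s of (md, a, b) \<Rightarrow>
     (md = 0 \<and> (a, a) \<in> E) \<or> (md = 1 \<and> (a, a+b) \<in> E) \<or> (md = 2 \<and> (a+b, a) \<in> E))"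

definition run_inv :: "unit option list list \<Rightarrow> nat \<times> nat \<times> nat \<Rightarrow> bool" where
  "run_inv w s = (case s of (md, a, b) \<Rightarrow>
     (md = 0 \<and> b = 0 \<and> w = replicate a LX) \<or>
     (md = 1 \<and> 0 < b \<and> w = replicate a LX @ replicate b LZ) \<or>
     (md = 2 \<and> 0 < b \<and> w = replicate a LX @ replicate b LY) \<or> md = 3)"

lemma rep_snoc: "replicate n x @ [x] = replicate (Suc n) x"
  by (induction n) auto

lemma run_inv_step: "run_inv w s \<Longrightarrow> run_inv (w@[l]) (step s l)"
  by (cases s) (auto simp: run_inv_def step_def rep_snoc)

lemma run_inv_all: "run_inv w (foldl step (0,0,0) w)"
proof (induction w rule: rev_induct)
  case Nil then show ?case by (simp add: run_inv_def)
next
  case (snoc l w)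
  then show ?case using run_inv_step[OF snoc.IH] by simp
qed

lemma run_X: "foldl step (0,a,0) (replicate k LX) = (0, a+k, 0)"
  by (induction k arbitrary: a) (auto simp: step_def)
lemma run_Z: "0 < b \<Longrightarrow> foldl step (1,a,b) (replicate k LZ) = (1, a, b+k)"
  by (induction k arbitrary: b) (auto simp: step_def)
lemma run_Y: "0 < b \<Longrightarrow> foldl step (2,a,b) (replicate k LY) = (2, a, b+k)"
  by (induction k arbitrary: b) (auto simp: step_def)

lemma run_wd: "acc E (foldl step (0,0,0) (wd m n)) \<longleftrightarrow> (m, n) \<in> E"
proof (cases "m \<le> n")
  case True
  show ?thesis
  proof (cases "n - m")
    case 0
    then have "n = m" using True by simp
    then show ?thesis by (simp add: wd_eq run_X acc_def)
  next
    case (Suc j)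
    have "foldl step (0,0,0) (wd m n) = foldl step (1, m, 1) (replicate j LZ)"
      using True Suc by (simp add: wd_eq run_X step_def)
    also have "\<dots> = (1, m, 1 + j)" using run_Z[of 1 m j] by simp
    moreover have "n = m + (1 + j)" using Suc True by arith
    ultimately show ?thesis by (simp add: acc_def)
  qed
next
  case False
  then obtain j where j: "m - n = Suc j" by (metis Suc_diff_Suc not_le)
  have "foldl step (0,0,0) (wd m n) = foldl step (2, n, 1) (replicate j LY)"
    using False j by (simp add: wd_eq run_X step_def)
  also have "\<dots> = (2, n, 1 + j)" using run_Y[of 1 n j] by simp
  moreover have "m = n + (1 + j)" using j False by arith
  ultimately show ?thesis by (simp add: acc_def)
qed

lemma Lg_run: "w \<in> Lg E \<longleftrightarrow> acc E (foldl step (0,0,0) w)"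
proof
  assume "w \<in> Lg E"
  then obtain m n where "w = wd m n" "(m,n) \<in> E" by (auto simp: Lg_def)
  then show "acc E (foldl step (0,0,0) w)" by (simp add: run_wd)
next
  assume A: "acc E (foldl step (0,0,0) w)"
  obtain md a b where s: "foldl step (0,0,0) w = (md, a, b)" by (metis prod_cases3)
  have I: "run_inv w (md,a,b)" using run_inv_all[of w] s by simp
  have "md = 0 \<and> w = wd a a \<and> (a,a) \<in> E \<or> md = 1 \<and> w = wd a (a+b) \<and> (a,a+b) \<in> E
        \<or> md = 2 \<and> w = wd (a+b) a \<and> (a+b,a) \<in> E"
    using A I s by (auto simp: acc_def run_inv_def wd_eq)
  then show "w \<in> Lg E" by (auto simp: Lg_def)
qed

definition col :: "nat \<Rightarrow> nat \<Rightarrow> nat \<times> nat \<times> nat \<Rightarrow> nat \<times> nat \<times> nat" where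
  "col T P s = (case s of (md, a, b) \<Rightarrow> (md, cl T P a, cl T P b))"

lemma cl_suc': "0 < P \<Longrightarrow> cl T P (Suc (cl T P a)) = cl T P (Suc a)"
  using cl_suc[of P T a] by simp

lemma col_step: "0 < P \<Longrightarrow> col T P (step (col T P s) l) = col T P (step s l)"
  by (cases s) (auto simp: col_def step_def cl_idem cl_suc' cl_zero)

lemma col_run: "0 < P \<Longrightarrow> foldl (\<lambda>s l. col T P (step s l)) (col T P s) w = col T P (foldl step s w)"
  by (induction w arbitrary: s) (simp_all add: col_step)

lemma acc_col: "nice T P E \<Longrightarrow> acc E (col T P s) = acc E s"
  using per_up[of T P E] per_down[of T P E] per_up[of T P E, where b=0]
  by (cases s) (auto simp: col_def acc_def cl_zero)

lemma nice_regular: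
  assumes n: "nice T P E"
  shows "regular (Lg E)"
proof -
  have P: "0 < P" using n by (simp add: nice_def)
  define Q where "Q = {..(3::nat)} \<times> {..<T+P} \<times> {..<T+P}"
  show ?thesis
  proof (rule regular_intro[where Q = Q and qi = "(0,0,0)" and \<delta> = "\<lambda>s l. col T P (step s l)"
        and F = "{s. acc E s}"])
    show "finite Q" by (simp add: Q_def)
    show "(0,0,0) \<in> Q" using P by (simp add: Q_def)
    show "\<forall>q\<in>Q. \<forall>x. col T P (step q x) \<in> Q"
      using P by (auto simp: Q_def col_def step_def cl_lt split: prod.splits)
    have c0: "col T P (0,0,0) = (0,0,0)" by (simp add: col_def cl_zero)
    show "Lg E = {w. foldl (\<lambda>s l. col T P (step s l)) (0,0,0) w \<in> {s. acc E s}}"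
    proof -
      have run: "foldl (\<lambda>s l. col T P (step s l)) (0,0,0) w = col T P (foldl step (0,0,0) w)" for w
        using col_run[OF P, where T=T and s="(0,0,0)"] c0 by simp
      show ?thesis using run acc_col[OF n] by (auto simp: Lg_run)
    qed
  qed
qed

lemma seg:
  assumes "\<forall>i<n. (f i, f (Suc i)) \<in> E" "a \<le> b" "b \<le> n" "\<forall>i. a \<le> i \<and> i \<le> b \<longrightarrow> f i \<in> V"
  shows "(f a, f b) \<in> (E \<inter> V \<times> V)\<^sup>*"
  using assms(2-4)
proof (induction b)
  case 0 then show ?case by simp
next
  case (Suc b)
  show ?case
  proof (cases "a = Suc b")
    case True then show ?thesis by simp
  next
    case False
    then have "(f a, f b) \<in> (E \<inter> V \<times> V)\<^sup>*" using Suc by auto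
    moreover have "(f b, f (Suc b)) \<in> E \<inter> V \<times> V" using Suc assms(1) False by auto
    ultimately show ?thesis by (rule rtrancl_into_rtrancl)
  qed
qed

definition Gr :: "nat \<Rightarrow> (nat \<times> nat) set \<Rightarrow> (nat \<times> nat) set" where
  "Gr T E = E \<inter> {T..} \<times> {T..}"

lemma shiftG:
  assumes n: "nice T P E" and p: "(p, q) \<in> (Gr T E)\<^sup>*" and d: "P dvd s"
  shows "(p + s, q + s) \<in> (Gr T E)\<^sup>*"
  using p
proof (induction rule: rtrancl_induct)
  case base then show ?case by simp
next
  case (step y z)
  obtain c where s: "s = c * P" using d by (auto simp: dvd_def mult.commute)
  have e: "(y + s, z + s) \<in> Gr T E"
    using step(2) nice_S1[OF n, of y z c] by (auto simp: Gr_def s)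
  show ?case using step(3) e by (rule rtrancl_into_rtrancl)
qed

lemma Gr_sub: "(Gr T E)\<^sup>* \<subseteq> E\<^sup>*"
  by (rule rtrancl_mono) (auto simp: Gr_def)

lemma M1:
  assumes n: "nice T P E"
  shows "\<exists>K P1. 0 < P1 \<and> (\<forall>x y m. x + K \<le> y \<longrightarrow> (x,y) \<in> E\<^sup>+ \<longrightarrow> (x, y + m*P1) \<in> E\<^sup>+)"
proof -
  have P: "0 < P" using n by (simp add: nice_def)
  define K where "K = 2*T + P*T + 1"
  define D where "D = (P+1)*T"
  define P1 where "P1 = fact D * P"
  have main: "(\<forall>c. (x, y + c*P) \<in> E\<^sup>+) \<or> (\<exists>d. 0 < d \<and> d \<le> D \<and> (\<forall>c. (x, y + c*d) \<in> E\<^sup>+))"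
    if xy: "x + K \<le> y" "(x,y) \<in> E\<^sup>+" for x y
  proof -
    obtain n0 where "n0 > 0" "(x,y) \<in> E ^^ n0" using xy(2) by (auto simp: trancl_power)
    then obtain f where f: "f 0 = x" "f n0 = y" "\<forall>i<n0. (f i, f (Suc i)) \<in> E"
      by (auto simp: relpow_fun_conv)
    define L where "L i = x + 2*T + i*T" for i
    define kk where "kk i = (GREATEST j. j \<le> n0 \<and> f j \<le> L i)" for i
    have Lle: "L i < y" if "i \<le> P" for i
    proof -
      have h: "i*T \<le> P*T" by (rule mult_le_mono1[OF that])
      show ?thesis using xy(1) h unfolding L_def K_def by linarith
    qed
    have kk1: "kk i \<le> n0 \<and> f (kk i) \<le> L i" for i
      unfolding kk_def by (rule GreatestI_nat[of _ 0 n0]) (auto simp: f L_def)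
    have kk2: "L i < f j" if "kk i < j" "j \<le> n0" for i j
    proof (rule ccontr)
      assume "\<not> L i < f j"
      then have "j \<le> (GREATEST j'. j' \<le> n0 \<and> f j' \<le> L i)"
        by (intro Greatest_le_nat[where b=n0]) (use that in auto)
      then have "j \<le> kk i" by (simp add: kk_def)
      then show False using that by simp
    qed
    have kk3: "kk i < n0" if "i \<le> P" for i
    proof -
      have "kk i \<noteq> n0" using kk1[of i] Lle[OF that] f(2) by auto
      then show ?thesis using kk1[of i] by simp
    qed
    have kkmono: "kk i \<le> kk j" if "i \<le> j" for i j
    proof -
      have "L i \<le> L j" using that by (simp add: L_def)
      have "kk i \<le> (GREATEST j'. j' \<le> n0 \<and> f j' \<le> L j)"
        by (rule Greatest_le_nat[where b=n0]) (use kk1[of i] \<open>L i \<le> L j\<close> in auto)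
      then show ?thesis by (simp add: kk_def[of j])
    qed
    have xu: "(x, f (kk i)) \<in> E\<^sup>*" for i
      using seg[OF f(3), of 0 "kk i" UNIV] kk1[of i] f(1) by simp
    have tailG: "(f (Suc (kk i)), y) \<in> (Gr T E)\<^sup>*" if "i \<le> P" for i
    proof -
      have "(f (Suc (kk i)), f n0) \<in> (E \<inter> {T..} \<times> {T..})\<^sup>*"
        using kk3[OF that]
        by (intro seg[OF f(3)]) (auto intro!: less_imp_le[OF le_less_trans[OF _ kk2[of i]]] simp: L_def)
      then show ?thesis using f(2) by (simp add: Gr_def)
    qed
    show ?thesis
    proof (cases "\<exists>i\<le>P. f (kk i) + T \<le> f (Suc (kk i))")
      case True
      then obtain i where i: "i \<le> P" "f (kk i) + T \<le> f (Suc (kk i))" by blast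
      have "(x, y + c*P) \<in> E\<^sup>+" for c
      proof -
        have e: "(f (kk i), f (Suc (kk i)) + c*P) \<in> E"
          using nice_S2[OF n i(2)] f(3) kk3[OF i(1)] by auto
        have "(f (Suc (kk i)) + c*P, y + c*P) \<in> (Gr T E)\<^sup>*"
          using shiftG[OF n tailG[OF i(1)], of "c*P"] by simp
        then have t: "(f (Suc (kk i)) + c*P, y + c*P) \<in> E\<^sup>*" using Gr_sub by blast
        show ?thesis using rtrancl_into_trancl1[OF xu[of i] e] t by (rule trancl_rtrancl_trancl)
      qed
      then show ?thesis by blast
    next
      case False
      then have short: "f (Suc (kk i)) < f (kk i) + T" if "i \<le> P" for i
        using that by auto
      define g where "g i = f (kk i) mod P" for i
      have "\<not> inj_on g {0..P}"
      proof
        assume inj: "inj_on g {0..P}"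
        have "card (g ` {0..P}) = P + 1" using card_image[OF inj] by simp
        moreover have "g ` {0..P} \<subseteq> {..<P}" using P by (auto simp: g_def)
        then have "card (g ` {0..P}) \<le> P" using card_mono[of "{..<P}"] by fastforce
        ultimately show False by simp
      qed
      then obtain i j where ij0: "i \<le> P" "j \<le> P" "i \<noteq> j" "g i = g j"
        unfolding inj_on_def by auto
      then obtain i j where ij: "i < j" "j \<le> P" "g i = g j"
        by (metis nat_neq_iff order.strict_trans1)
      define ui where "ui = f (kk i)"
      define uj where "uj = f (kk j)"
      have ilow: "L i < ui + T" using short[of i] kk2[of i "Suc (kk i)"] kk3[of i] ij
        by (auto simp: ui_def)
      have jlow: "L j < uj + T" using short[of j] kk2[of j "Suc (kk j)"] kk3[of j] ij
        by (auto simp: uj_def)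
      have uiL: "ui \<le> L i" using kk1[of i] by (simp add: ui_def)
      have ujL: "uj \<le> L j" using kk1[of j] by (simp add: uj_def)
      have "Suc i * T \<le> j * T" using ij by (intro mult_le_mono1) simp
      then have LiLj: "L i + T \<le> L j" by (simp add: L_def)
      have lt: "ui < uj" using ilow jlow uiL LiLj by linarith
      define d where "d = uj - ui"
      have d0: "0 < d" using lt by (simp add: d_def)
      have dP: "P dvd d"
        using ij(3) lt mod_eq_dvd_iff_nat[of ui uj P] by (simp add: g_def ui_def uj_def d_def)
      have LjP: "L j \<le> x + 2*T + P*T" using ij by (simp add: L_def)
      have dD: "d \<le> D" using ujL LjP ilow by (simp add: d_def D_def L_def algebra_simps; linarith)
      have uiT: "T \<le> ui" using ilow by (simp add: L_def)
      have loop: "(ui, uj) \<in> (Gr T E)\<^sup>*"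
      proof -
        have "(f (kk i), f (kk j)) \<in> (E \<inter> {T..} \<times> {T..})\<^sup>*"
        proof (intro seg[OF f(3)])
          show "kk i \<le> kk j" using kkmono ij by simp
          show "kk j \<le> n0" using kk1 by simp
          show "\<forall>k. kk i \<le> k \<and> k \<le> kk j \<longrightarrow> f k \<in> {T..}"
          proof (intro allI impI)
            fix k assume k: "kk i \<le> k \<and> k \<le> kk j"
            show "f k \<in> {T..}"
            proof (cases "k = kk i")
              case True then show ?thesis using uiT by (simp add: ui_def)
            next
              case False
              then have "L i < f k" using k kk2[of i k] kk1[of j] by auto
              then show ?thesis by (simp add: L_def)
            qed
          qed
        qed
        then show ?thesis by (simp add: ui_def uj_def Gr_def)
      qed
      have tail: "(uj, y) \<in> (Gr T E)\<^sup>*"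
      proof -
        have "(f (kk j), f n0) \<in> (E \<inter> {T..} \<times> {T..})\<^sup>*"
        proof (intro seg[OF f(3)])
          show "kk j \<le> n0" using kk1 by simp
          show "\<forall>k. kk j \<le> k \<and> k \<le> n0 \<longrightarrow> f k \<in> {T..}"
          proof (intro allI impI)
            fix k assume k: "kk j \<le> k \<and> k \<le> n0"
            show "f k \<in> {T..}"
            proof (cases "k = kk j")
              case True then show ?thesis using uiT lt by (simp add: uj_def)
            next
              case False
              then have "L j < f k" using k kk2[of j k] by auto
              then show ?thesis by (simp add: L_def)
            qed
          qed
        qed simp
        then show ?thesis using f(2) by (simp add: uj_def Gr_def)
      qed
      have pump: "(ui, uj + c*d) \<in> (Gr T E)\<^sup>*" for c
      proof (induction c)
        case 0 then show ?case using loop by simp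
      next
        case (Suc c)
        have A: "(ui + (c+1)*d, uj + (c+1)*d) \<in> (Gr T E)\<^sup>*"
          by (rule shiftG[OF n loop]) (use dP in simp)
        have eq1: "ui + (c+1)*d = uj + c*d"
        proof -
          have "uj = ui + d" using lt by (simp add: d_def)
          then show ?thesis by (simp add: algebra_simps)
        qed
        have "(uj + c*d, uj + Suc c * d) \<in> (Gr T E)\<^sup>*" using A unfolding eq1 by simp
        with Suc show ?case by (rule rtrancl_trans)
      qed
      have "(x, y + c*d) \<in> E\<^sup>+" for c
      proof -
        have "(uj + c*d, y + c*d) \<in> (Gr T E)\<^sup>*" using shiftG[OF n tail, of "c*d"] dP by simp
        then have "(ui, y + c*d) \<in> (Gr T E)\<^sup>*" using pump[of c] by (rule rtrancl_trans[rotated])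
        then have "(ui, y + c*d) \<in> E\<^sup>*" using Gr_sub by blast
        then have "(x, y + c*d) \<in> E\<^sup>*" using xu[of i] by (simp add: ui_def)
        moreover have "x \<noteq> y + c*d" using xy(1) by (simp add: K_def)
        ultimately show ?thesis by (simp add: rtrancl_eq_or_trancl)
      qed
      then show ?thesis using d0 dD by blast
    qed
  qed
  show ?thesis
  proof (intro exI conjI allI impI)
    show "0 < P1" using P by (simp add: P1_def)
  next
    fix x y m assume xy: "x + K \<le> y" "(x,y) \<in> E\<^sup>+"
    from main[OF xy] show "(x, y + m*P1) \<in> E\<^sup>+"
    proof
      assume a: "\<forall>c. (x, y + c*P) \<in> E\<^sup>+"
      have "m * P1 = (m * fact D) * P" by (simp add: P1_def mult.assoc)
      then show ?thesis using a by metis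
    next
      assume "\<exists>d. 0 < d \<and> d \<le> D \<and> (\<forall>c. (x, y + c*d) \<in> E\<^sup>+)"
      then obtain d where d: "0 < d" "d \<le> D" "\<forall>c. (x, y + c*d) \<in> E\<^sup>+" by blast
      have "d dvd fact D" using d by (intro dvd_fact) auto
      then obtain q where "fact D = d * q" by (auto simp: dvd_def)
      then have "m * P1 = (m * q * P) * d" by (simp add: P1_def mult_ac)
      then show ?thesis using d(3) by metis
    qed
  qed
qed

lemma nice_conv: "nice T P E \<Longrightarrow> nice T P (E\<inverse>)"
proof -
  assume n: "nice T P E"
  show ?thesis unfolding nice_def converse_iff
  proof (intro conjI allI impI)
    show "0 < P" using n by (simp add: nice_def)
  next
    fix x y assume "T \<le> x" "T \<le> y"
    then show "((y,x) \<in> E \<longleftrightarrow> (y+P, x+P) \<in> E)" using n unfolding nice_def by blast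
  next
    fix x y assume "x + T \<le> y"
    then show "((y,x) \<in> E \<longleftrightarrow> (y+P, x) \<in> E)" using n unfolding nice_def by blast
  next
    fix x y assume "y + T \<le> x"
    then show "((y,x) \<in> E \<longleftrightarrow> (y, x+P) \<in> E)" using n unfolding nice_def by blast
  qed
qed

lemma M2:
  assumes n: "nice T P E"
  shows "\<exists>K P2. 0 < P2 \<and> (\<forall>x y m. y + K \<le> x \<longrightarrow> (x,y) \<in> E\<^sup>+ \<longrightarrow> (x + m*P2, y) \<in> E\<^sup>+)"
proof -
  obtain K P2 where K: "0 < P2" "\<forall>x y m. x + K \<le> y \<longrightarrow> (x,y) \<in> (E\<inverse>)\<^sup>+ \<longrightarrow> (x, y + m*P2) \<in> (E\<inverse>)\<^sup>+"
    using M1[OF nice_conv[OF n]] by blast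
  show ?thesis
    using K by (intro exI[of _ K] exI[of _ P2]) (auto simp: trancl_converse)
qed

lemma M3aux:
  assumes n: "nice T P E" and xy: "(x,y) \<in> E\<^sup>+" and d: "P dvd s"
  shows "T \<le> x \<Longrightarrow> T \<le> y \<Longrightarrow> (x+s, y+s) \<in> E\<^sup>+ \<or> (\<exists>z<T. (x,z) \<in> E\<^sup>+ \<and> (z,y) \<in> E\<^sup>+)"
  using xy
proof (induction rule: trancl_induct)
  case (base y)
  obtain c where s: "s = c * P" using d by (auto simp: dvd_def mult.commute)
  then show ?case using base nice_S1[OF n, of x y c] by auto
next
  case (step y z)
  obtain c where s: "s = c * P" using d by (auto simp: dvd_def mult.commute)
  show ?case
  proof (cases "T \<le> y")
    case False
    have "(y,z) \<in> E\<^sup>+" using step(2) by auto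
    then show ?thesis using step(1) False by (intro disjI2 exI[of _ y]) auto
  next
    case True
    from step.IH[OF step.prems(1) True] show ?thesis
    proof
      assume a: "(x+s, y+s) \<in> E\<^sup>+"
      have "(y+s, z+s) \<in> E" using step True nice_S1[OF n, of y z c] s by auto
      then show ?thesis using a by auto
    next
      assume "\<exists>w<T. (x,w) \<in> E\<^sup>+ \<and> (w,y) \<in> E\<^sup>+"
      then obtain w where "w < T" "(x,w) \<in> E\<^sup>+" "(w,y) \<in> E\<^sup>+" by blast
      moreover have "(w,z) \<in> E\<^sup>+" using \<open>(w,y) \<in> E\<^sup>+\<close> step(2) by (rule trancl_into_trancl)
      ultimately show ?thesis by blast
    qed
  qed
qed

lemma three:
  assumes n: "nice T P E"
  shows "\<exists>K Q A. 0 < Q \<and>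
     (\<forall>x y. x + K \<le> y \<longrightarrow> (x,y) \<in> E\<^sup>+ \<longrightarrow> (x, y+Q) \<in> E\<^sup>+) \<and>
     (\<forall>x y. y + K \<le> x \<longrightarrow> (x,y) \<in> E\<^sup>+ \<longrightarrow> (x+Q, y) \<in> E\<^sup>+) \<and>
     (\<forall>x y. A \<le> x \<longrightarrow> A \<le> y \<longrightarrow> (x,y) \<in> E\<^sup>+ \<longrightarrow> (x+Q, y+Q) \<in> E\<^sup>+)"
proof -
  have P: "0 < P" using n by (simp add: nice_def)
  obtain K1 P1 where K1: "0 < P1" "\<forall>x y m. x + K1 \<le> y \<longrightarrow> (x,y) \<in> E\<^sup>+ \<longrightarrow> (x, y + m*P1) \<in> E\<^sup>+"
    using M1[OF n] by blast
  obtain K2 P2 where K2: "0 < P2" "\<forall>x y m. y + K2 \<le> x \<longrightarrow> (x,y) \<in> E\<^sup>+ \<longrightarrow> (x + m*P2, y) \<in> E\<^sup>+"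
    using M2[OF n] by blast
  define Q where "Q = P1 * P2 * P"
  have Q1: "Q = (P2*P) * P1" by (simp add: Q_def mult_ac)
  have Q2: "Q = (P1*P) * P2" by (simp add: Q_def mult_ac)
  have a1: "(x, y+Q) \<in> E\<^sup>+" if "x + K1 \<le> y" "(x,y) \<in> E\<^sup>+" for x y
    using K1(2)[rule_format, OF that, of "P2*P"] by (simp add: Q1)
  have b1: "(x+Q, y) \<in> E\<^sup>+" if "y + K2 \<le> x" "(x,y) \<in> E\<^sup>+" for x y
    using K2(2)[rule_format, OF that, of "P1*P"] by (simp add: Q2)
  have a: "\<forall>x y. x + (K1+K2) \<le> y \<longrightarrow> (x,y) \<in> E\<^sup>+ \<longrightarrow> (x, y+Q) \<in> E\<^sup>+"
    using a1 by simp
  have b: "\<forall>x y. y + (K1+K2) \<le> x \<longrightarrow> (x,y) \<in> E\<^sup>+ \<longrightarrow> (x+Q, y) \<in> E\<^sup>+"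
    using b1 by simp
  have c: "\<forall>x y. T + K1 + K2 \<le> x \<longrightarrow> T + K1 + K2 \<le> y \<longrightarrow> (x,y) \<in> E\<^sup>+ \<longrightarrow> (x+Q, y+Q) \<in> E\<^sup>+"
  proof (intro allI impI)
    fix x y assume xy: "T + K1 + K2 \<le> x" "T + K1 + K2 \<le> y" "(x,y) \<in> E\<^sup>+"
    have d: "P dvd Q" by (simp add: Q_def)
    have Tx: "T \<le> x" "T \<le> y" using xy by auto
    from M3aux[OF n xy(3) d Tx] show "(x+Q, y+Q) \<in> E\<^sup>+"
    proof (elim disjE exE conjE)
      fix z assume z: "z < T" "(x,z) \<in> E\<^sup>+" "(z,y) \<in> E\<^sup>+"
      have "(x + Q, z) \<in> E\<^sup>+" using b1 z xy by simp
      moreover have "(z, y + Q) \<in> E\<^sup>+" using a1 z xy by simp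
      ultimately show ?thesis by (rule trancl_trans)
    qed auto
  qed
  show ?thesis using a b c P K1(1) K2(1) by (intro exI[of _ "K1+K2"] exI[of _ Q] exI[of _ "T+K1+K2"]) (auto simp: Q_def)
qed

lemma mono1:
  assumes "\<forall>b. f b \<longrightarrow> f (Suc b)"
  shows "\<exists>N. \<forall>b\<ge>N. f b = f (Suc b)"
proof (cases "\<exists>b. f b")
  case True
  then obtain b0 where b0: "f b0" by blast
  have "f b" if "b0 \<le> b" for b
    using that
  proof (induction b rule: dec_induct)
    case base then show ?case using b0 .
  next
    case (step n) then show ?case using assms by blast
  qed
  then show ?thesis by (intro exI[of _ b0]) (auto intro: le_SucI)
next
  case False then show ?thesis by (intro exI[of _ 0]) auto
qed

lemma uniform:
  fixes Pr :: "'i \<Rightarrow> nat \<Rightarrow> bool"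
  assumes "finite I" "\<forall>i\<in>I. \<exists>N. \<forall>n\<ge>N. Pr i n"
  shows "\<exists>N. \<forall>i\<in>I. \<forall>n\<ge>N. Pr i n"
proof -
  from assms(2) obtain g where g: "\<forall>i\<in>I. \<forall>n\<ge>g i. Pr i n" by metis
  define N where "N = Max (insert 0 (g ` I))"
  have "g i \<le> N" if "i \<in> I" for i
    unfolding N_def using assms(1) that by (intro Max_ge) auto
  then have "\<forall>i\<in>I. \<forall>n\<ge>N. Pr i n"
  proof (intro ballI allI impI)
    fix i n assume "\<And>i. i \<in> I \<Longrightarrow> g i \<le> N" "i \<in> I" "N \<le> n"
    then have "g i \<le> n" by fastforce
    then show "Pr i n" using g \<open>i \<in> I\<close> by blast
  qed
  then show ?thesis by blast
qed

lemma grid_mono: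
  assumes ha: "\<forall>a b. h a b \<longrightarrow> h (Suc a) b" and hb: "\<forall>a b. h a b \<longrightarrow> h a (Suc b)"
  shows "h a b \<Longrightarrow> a \<le> a' \<Longrightarrow> b \<le> b' \<Longrightarrow> h a' b'"
proof -
  assume h: "h a b" and a: "a \<le> a'" and b: "b \<le> b'"
  have hab: "h a' b" using a
  proof (induction a' rule: dec_induct)
    case base then show ?case using h .
  next
    case (step n) from step(3) show ?case by (rule ha[rule_format])
  qed
  show "h a' b'" using b
  proof (induction b' rule: dec_induct)
    case base then show ?case using hab .
  next
    case (step n) from step(3) show ?case by (rule hb[rule_format])
  qed
qed

lemma grid:
  assumes ha: "\<forall>a b. h a b \<longrightarrow> h (Suc a) b" and hb: "\<forall>a b. h a b \<longrightarrow> h a (Suc b)"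
  shows "(\<exists>N. \<forall>a\<ge>N. \<forall>b. h a b = h (Suc a) b) \<and> (\<exists>M. \<forall>b\<ge>M. \<forall>a. h a b = h a (Suc b))"
proof (cases "\<exists>a b. h a b")
  case False
  then have "\<forall>a\<ge>0. \<forall>b. h a b = h (Suc a) b" "\<forall>b\<ge>0. \<forall>a. h a b = h a (Suc b)" by auto
  then show ?thesis by blast
next
  case True
  define bs where "bs = (LEAST b. \<exists>a. h a b)"
  have ex: "\<exists>b a. h a b" using True by blast
  have "\<exists>a. h a bs" unfolding bs_def by (rule LeastI_ex[of "\<lambda>b. \<exists>a. h a b", OF ex])
  then obtain as where as: "h as bs" by blast
  have row: "h a b \<longleftrightarrow> bs \<le> b" if "as \<le> a" for a b
  proof
    assume "h a b"
    then have "\<exists>a. h a b" by blast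
    then show "bs \<le> b" unfolding bs_def by (rule Least_le)
  next
    assume "bs \<le> b" then show "h a b" by (rule grid_mono[OF ha hb as that])
  qed
  have part1: "\<forall>a\<ge>as. \<forall>b. h a b = h (Suc a) b"
  proof (intro allI impI)
    fix a b assume "as \<le> a"
    then show "h a b = h (Suc a) b" using row[of a b] row[of "Suc a" b] by simp
  qed
  have "\<forall>a\<in>{..as}. \<exists>N. \<forall>n\<ge>N. \<forall>b\<ge>n. h a b = h a (Suc b)"
  proof
    fix a
    have "\<forall>b. h a b \<longrightarrow> h a (Suc b)" using hb by blast
    then obtain N where N: "\<forall>b\<ge>N. h a b = h a (Suc b)" using mono1[of "h a"] by blast
    show "\<exists>N. \<forall>n\<ge>N. \<forall>b\<ge>n. h a b = h a (Suc b)"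
    proof (intro exI[of _ N] allI impI)
      fix n b assume "N \<le> n" "n \<le> b"
      then have "N \<le> b" by linarith
      then show "h a b = h a (Suc b)" using N by blast
    qed
  qed
  then obtain M where M: "\<forall>a\<in>{..as}. \<forall>n\<ge>M. \<forall>b\<ge>n. h a b = h a (Suc b)"
    using uniform[of "{..as}" "\<lambda>a n. \<forall>b\<ge>n. h a b = h a (Suc b)"] by auto
  have part2: "\<forall>b\<ge>M + bs. \<forall>a. h a b = h a (Suc b)"
  proof (intro allI impI)
    fix a b assume b: "M + bs \<le> b"
    show "h a b = h a (Suc b)"
    proof (cases "a \<le> as")
      case True
      have "a \<in> {..as}" using True by simp
      then show ?thesis using M[rule_format, of a b b] b by simp
    next
      case False
      then have "as \<le> a" by simp
      then show ?thesis using row[of a b] row[of a "Suc b"] b by simp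
    qed
  qed
  show ?thesis by (intro conjI exI[of _ as] exI[of _ "M+bs"] part1 part2)
qed

lemma decomp:
  fixes Q A x :: nat
  assumes "0 < Q" "A \<le> x"
  shows "x = (A + (x - A) mod Q) + ((x - A) div Q) * Q" "A + (x - A) mod Q \<in> {A..<A+Q}"
proof -
  have "(x-A) mod Q + (x-A) div Q * Q = x - A" by simp
  then show "x = (A + (x - A) mod Q) + ((x - A) div Q) * Q" using assms by linarith
  show "A + (x - A) mod Q \<in> {A..<A+Q}" using assms by simp
qed

lemma div_ge:
  fixes Q A x N :: nat
  assumes "0 < Q" "A + N * Q \<le> x"
  shows "N \<le> (x - A) div Q"
proof -
  have "A \<le> x" using assms(2) by simp
  then have "N * Q \<le> x - A" using assms(2) le_diff_conv2[of A x "N*Q"] by (simp add: add.commute)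
  then have "(N * Q) div Q \<le> (x - A) div Q" by (rule div_le_mono)
  then show ?thesis using assms by simp
qed

lemma final_up:
  fixes R :: "(nat \<times> nat) set"
  assumes Q: "0 < Q"
    and m1: "\<forall>x y. x + K \<le> y \<longrightarrow> (x,y) \<in> R \<longrightarrow> (x, y+Q) \<in> R"
    and m3: "\<forall>x y. A \<le> x \<longrightarrow> A \<le> y \<longrightarrow> (x,y) \<in> R \<longrightarrow> (x+Q, y+Q) \<in> R"
  shows "\<exists>T'. (\<forall>x y. T' \<le> x \<longrightarrow> x \<le> y \<longrightarrow> ((x,y) \<in> R \<longleftrightarrow> (x+Q, y+Q) \<in> R)) \<and>
              (\<forall>x y. x + T' \<le> y \<longrightarrow> ((x,y) \<in> R \<longleftrightarrow> (x, y+Q) \<in> R))"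
proof -
  define H where "H x0 k0 a b = ((x0 + a*Q, x0 + a*Q + (k0 + b*Q)) \<in> R)" for x0 k0 a b
  have Ha: "\<forall>a b. H x0 k0 a b \<longrightarrow> H x0 k0 (Suc a) b" if "A \<le> x0" for x0 k0
  proof (intro allI impI)
    fix a b assume h: "H x0 k0 a b"
    have "(x0 + a*Q + Q, x0 + a*Q + (k0 + b*Q) + Q) \<in> R"
      using m3[rule_format, of "x0 + a*Q" "x0 + a*Q + (k0 + b*Q)"] that h unfolding H_def by simp
    then show "H x0 k0 (Suc a) b" unfolding H_def by (simp add: algebra_simps)
  qed
  have Hb: "\<forall>a b. H x0 k0 a b \<longrightarrow> H x0 k0 a (Suc b)" if "K \<le> k0" for x0 k0
  proof (intro allI impI)
    fix a b assume h: "H x0 k0 a b"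
    have "(x0 + a*Q, x0 + a*Q + (k0 + b*Q) + Q) \<in> R"
      using m1[rule_format, of "x0 + a*Q" "x0 + a*Q + (k0 + b*Q)"] that h unfolding H_def by simp
    then show "H x0 k0 a (Suc b)" unfolding H_def by (simp add: algebra_simps)
  qed
  define I1 where "I1 = {A..<A+Q} \<times> {K..<K+Q}"
  define P1 where "P1 i n = (\<forall>a\<ge>n. \<forall>b. H (fst i) (snd i) a b = H (fst i) (snd i) (Suc a) b)" for i n
  define P2 where "P2 i n = (\<forall>b\<ge>n. \<forall>a. H (fst i) (snd i) a b = H (fst i) (snd i) a (Suc b))" for i n
  have "\<forall>i\<in>I1. \<exists>N. \<forall>n\<ge>N. P1 i n"
  proof
    fix i assume i: "i \<in> I1"
    have i': "A \<le> fst i" "K \<le> snd i" using i by (auto simp: I1_def)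
    obtain N where N: "\<forall>a\<ge>N. \<forall>b. H (fst i) (snd i) a b = H (fst i) (snd i) (Suc a) b"
      using grid[OF Ha[OF i'(1)] Hb[OF i'(2)]] by blast
    show "\<exists>N. \<forall>n\<ge>N. P1 i n"
      by (rule exI[of _ N]) (auto simp: P1_def intro!: N[rule_format])
  qed
  then obtain N1 where N1: "\<forall>i\<in>I1. \<forall>n\<ge>N1. P1 i n"
    using uniform[of I1 P1] by (auto simp: I1_def)
  have "\<forall>i\<in>I1. \<exists>N. \<forall>n\<ge>N. P2 i n"
  proof
    fix i assume i: "i \<in> I1"
    have i': "A \<le> fst i" "K \<le> snd i" using i by (auto simp: I1_def)
    obtain N where N: "\<forall>b\<ge>N. \<forall>a. H (fst i) (snd i) a b = H (fst i) (snd i) a (Suc b)"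
      using grid[OF Ha[OF i'(1)] Hb[OF i'(2)]] by blast
    show "\<exists>N. \<forall>n\<ge>N. P2 i n"
      by (rule exI[of _ N]) (auto simp: P2_def intro!: N[rule_format])
  qed
  then obtain N2 where N2: "\<forall>i\<in>I1. \<forall>n\<ge>N2. P2 i n"
    using uniform[of I1 P2] by (auto simp: I1_def)
  define I3 where "I3 = {A..<A+Q} \<times> {..<K}"
  define P3 where "P3 i n = (\<forall>a\<ge>n. (fst i + a*Q, fst i + a*Q + snd i) \<in> R \<longleftrightarrow>
       (fst i + Suc a*Q, fst i + Suc a*Q + snd i) \<in> R)" for i n
  have "\<forall>i\<in>I3. \<exists>N. \<forall>n\<ge>N. P3 i n"
  proof
    fix i assume i: "i \<in> I3"
    have "\<forall>a. (fst i + a*Q, fst i + a*Q + snd i) \<in> R \<longrightarrow> (fst i + Suc a*Q, fst i + Suc a*Q + snd i) \<in> R"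
    proof (intro allI impI)
      fix a assume "(fst i + a*Q, fst i + a*Q + snd i) \<in> R"
      then have "(fst i + a*Q + Q, fst i + a*Q + snd i + Q) \<in> R"
        using m3[rule_format, of "fst i + a*Q" "fst i + a*Q + snd i"] i by (auto simp: I3_def)
      then show "(fst i + Suc a*Q, fst i + Suc a*Q + snd i) \<in> R" by (simp add: algebra_simps)
    qed
    then obtain N where N: "\<forall>a\<ge>N. ((fst i + a*Q, fst i + a*Q + snd i) \<in> R) = ((fst i + Suc a*Q, fst i + Suc a*Q + snd i) \<in> R)"
      using mono1[of "\<lambda>a. (fst i + a*Q, fst i + a*Q + snd i) \<in> R"] by auto
    show "\<exists>N. \<forall>n\<ge>N. P3 i n"
      unfolding P3_def
    proof (intro exI[of _ N] allI impI)
      fix n a assume "N \<le> n" "n \<le> a"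
      then have "N \<le> a" by linarith
      then show "((fst i + a*Q, fst i + a*Q + snd i) \<in> R) = ((fst i + Suc a*Q, fst i + Suc a*Q + snd i) \<in> R)"
        using N by blast
    qed
  qed
  then obtain N3 where N3: "\<forall>i\<in>I3. \<forall>n\<ge>N3. P3 i n"
    using uniform[of I3 P3] by (auto simp: I3_def)
  define I4 where "I4 = {..<A} \<times> {K..<K+Q}"
  define P4 where "P4 i n = (\<forall>b\<ge>n. (fst i, fst i + (snd i + b*Q)) \<in> R \<longleftrightarrow>
       (fst i, fst i + (snd i + Suc b*Q)) \<in> R)" for i n
  have "\<forall>i\<in>I4. \<exists>N. \<forall>n\<ge>N. P4 i n"
  proof
    fix i assume i: "i \<in> I4"
    have "\<forall>b. (fst i, fst i + (snd i + b*Q)) \<in> R \<longrightarrow> (fst i, fst i + (snd i + Suc b*Q)) \<in> R"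
    proof (intro allI impI)
      fix b assume "(fst i, fst i + (snd i + b*Q)) \<in> R"
      then have "(fst i, fst i + (snd i + b*Q) + Q) \<in> R"
        using m1[rule_format, of "fst i" "fst i + (snd i + b*Q)"] i by (auto simp: I4_def)
      then show "(fst i, fst i + (snd i + Suc b*Q)) \<in> R" by (simp add: algebra_simps)
    qed
    then obtain N where N: "\<forall>b\<ge>N. ((fst i, fst i + (snd i + b*Q)) \<in> R) = ((fst i, fst i + (snd i + Suc b*Q)) \<in> R)"
      using mono1[of "\<lambda>b. (fst i, fst i + (snd i + b*Q)) \<in> R"] by auto
    show "\<exists>N. \<forall>n\<ge>N. P4 i n"
      unfolding P4_def
    proof (intro exI[of _ N] allI impI)
      fix n b assume "N \<le> n" "n \<le> b"
      then have "N \<le> b" by linarith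
      then show "((fst i, fst i + (snd i + b*Q)) \<in> R) = ((fst i, fst i + (snd i + Suc b*Q)) \<in> R)"
        using N by blast
    qed
  qed
  then obtain N4 where N4: "\<forall>i\<in>I4. \<forall>n\<ge>N4. P4 i n"
    using uniform[of I4 P4] by (auto simp: I4_def)
  define N where "N = N1 + N2 + N3 + N4"
  define T' where "T' = A + K + N * Q"
  have U1: "(x,y) \<in> R \<longleftrightarrow> (x+Q, y+Q) \<in> R" if xy: "T' \<le> x" "x \<le> y" for x y
  proof -
    define k where "k = y - x"
    have y: "y = x + k" using xy by (simp add: k_def)
    define x0 where "x0 = A + (x - A) mod Q"
    define a where "a = (x - A) div Q"
    have Ax: "A \<le> x" using xy by (simp add: T'_def)
    have x: "x = x0 + a*Q" unfolding x0_def a_def by (rule decomp(1)[OF Q Ax])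
    have x0: "x0 \<in> {A..<A+Q}" using decomp(2)[OF Q Ax] by (simp add: x0_def)
    have aN: "N \<le> a" unfolding a_def by (rule div_ge[OF Q]) (use xy in \<open>simp add: T'_def\<close>)
    show ?thesis
    proof (cases "k < K")
      case True
      have "(x0, k) \<in> I3" using x0 True by (simp add: I3_def)
      then have "P3 (x0, k) a" using N3 aN by (simp add: N_def)
      then have F: "(x0 + a*Q, x0 + a*Q + k) \<in> R \<longleftrightarrow> (x0 + Suc a*Q, x0 + Suc a*Q + k) \<in> R"
        unfolding P3_def fst_conv snd_conv by blast
      have e1: "(x0 + a*Q, x0 + a*Q + k) = (x,y)" using x y by simp
      have e2: "(x0 + Suc a*Q, x0 + Suc a*Q + k) = (x+Q,y+Q)" using x y by simp
      show ?thesis using F unfolding e1 e2 .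
    next
      case False
      define k0 where "k0 = K + (k - K) mod Q"
      define b where "b = (k - K) div Q"
      have Kk: "K \<le> k" using False by simp
      have k: "k = k0 + b*Q" unfolding k0_def b_def by (rule decomp(1)[OF Q Kk])
      have k0: "k0 \<in> {K..<K+Q}" using decomp(2)[OF Q Kk] by (simp add: k0_def)
      have "(x0, k0) \<in> I1" using x0 k0 by (simp add: I1_def)
      then have "P1 (x0, k0) a" using N1 aN by (simp add: N_def)
      then have "H x0 k0 a b = H x0 k0 (Suc a) b" unfolding P1_def fst_conv snd_conv by blast
      moreover have "H x0 k0 a b = ((x,y) \<in> R)" unfolding H_def using x y k by simp
      moreover have "H x0 k0 (Suc a) b = ((x+Q,y+Q) \<in> R)" unfolding H_def using x y k by (simp add: algebra_simps)
      ultimately show ?thesis by simp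
    qed
  qed
  have U2: "(x,y) \<in> R \<longleftrightarrow> (x, y+Q) \<in> R" if xy: "x + T' \<le> y" for x y
  proof -
    define k where "k = y - x"
    have y: "y = x + k" using xy by (simp add: k_def)
    define k0 where "k0 = K + (k - K) mod Q"
    define b where "b = (k - K) div Q"
    have Kk: "K \<le> k" using xy by (simp add: T'_def k_def)
    have k: "k = k0 + b*Q" unfolding k0_def b_def by (rule decomp(1)[OF Q Kk])
    have k0: "k0 \<in> {K..<K+Q}" using decomp(2)[OF Q Kk] by (simp add: k0_def)
    have bN: "N \<le> b" unfolding b_def by (rule div_ge[OF Q]) (use xy in \<open>simp add: T'_def k_def\<close>)
    show ?thesis
    proof (cases "A \<le> x")
      case True
      define x0 where "x0 = A + (x - A) mod Q"
      define a where "a = (x - A) div Q"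
      have x: "x = x0 + a*Q" unfolding x0_def a_def by (rule decomp(1)[OF Q True])
      have x0: "x0 \<in> {A..<A+Q}" using decomp(2)[OF Q True] by (simp add: x0_def)
      have "(x0, k0) \<in> I1" using x0 k0 by (simp add: I1_def)
      then have "P2 (x0, k0) b" using N2 bN by (simp add: N_def)
      then have "H x0 k0 a b = H x0 k0 a (Suc b)" unfolding P2_def fst_conv snd_conv by blast
      moreover have "H x0 k0 a b = ((x,y) \<in> R)" unfolding H_def using x y k by simp
      moreover have "H x0 k0 a (Suc b) = ((x,y+Q) \<in> R)" unfolding H_def using x y k by (simp add: algebra_simps)
      ultimately show ?thesis by simp
    next
      case False
      have "(x, k0) \<in> I4" using False k0 by (simp add: I4_def)
      then have "P4 (x, k0) b" using N4 bN by (simp add: N_def)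
      then have F: "(x, x + (k0 + b*Q)) \<in> R \<longleftrightarrow> (x, x + (k0 + Suc b*Q)) \<in> R" unfolding P4_def fst_conv snd_conv by blast
      have e1: "(x, x + (k0 + b*Q)) = (x, y)" using y k by simp
      have e2: "(x, x + (k0 + Suc b*Q)) = (x, y + Q)" using y k by simp
      show ?thesis using F unfolding e1 e2 .
    qed
  qed
  show ?thesis using U1 U2 by blast
qed

lemma trancl_nice:
  assumes n: "nice T P E"
  shows "\<exists>T' Q. nice T' Q (E\<^sup>+)"
proof -
  obtain K Q A where Q: "0 < Q"
    and m1: "\<forall>x y. x + K \<le> y \<longrightarrow> (x,y) \<in> E\<^sup>+ \<longrightarrow> (x, y+Q) \<in> E\<^sup>+"
    and m2: "\<forall>x y. y + K \<le> x \<longrightarrow> (x,y) \<in> E\<^sup>+ \<longrightarrow> (x+Q, y) \<in> E\<^sup>+"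
    and m3: "\<forall>x y. A \<le> x \<longrightarrow> A \<le> y \<longrightarrow> (x,y) \<in> E\<^sup>+ \<longrightarrow> (x+Q, y+Q) \<in> E\<^sup>+"
    using three[OF n] by blast
  define R where "R = E\<^sup>+"
  obtain T1 where T1: "\<forall>x y. T1 \<le> x \<longrightarrow> x \<le> y \<longrightarrow> ((x,y) \<in> R \<longleftrightarrow> (x+Q, y+Q) \<in> R)"
      "\<forall>x y. x + T1 \<le> y \<longrightarrow> ((x,y) \<in> R \<longleftrightarrow> (x, y+Q) \<in> R)"
    using final_up[OF Q, of K R A] m1 m3 unfolding R_def by blast
  have m1': "\<forall>x y. x + K \<le> y \<longrightarrow> (x,y) \<in> R\<inverse> \<longrightarrow> (x, y+Q) \<in> R\<inverse>"
    using m2 unfolding R_def by simp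
  have m3': "\<forall>x y. A \<le> x \<longrightarrow> A \<le> y \<longrightarrow> (x,y) \<in> R\<inverse> \<longrightarrow> (x+Q, y+Q) \<in> R\<inverse>"
    using m3 unfolding R_def by simp
  obtain T2 where T2: "\<forall>x y. T2 \<le> x \<longrightarrow> x \<le> y \<longrightarrow> ((x,y) \<in> R\<inverse> \<longleftrightarrow> (x+Q, y+Q) \<in> R\<inverse>)"
      "\<forall>x y. x + T2 \<le> y \<longrightarrow> ((x,y) \<in> R\<inverse> \<longleftrightarrow> (x, y+Q) \<in> R\<inverse>)"
    using final_up[OF Q m1' m3'] by blast
  define T' where "T' = T1 + T2"
  have "nice T' Q R"
    unfolding nice_def
  proof (intro conjI allI impI)
    show "0 < Q" by (rule Q)
  next
    fix x y assume xy: "T' \<le> x" "T' \<le> y"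
    show "(x, y) \<in> R \<longleftrightarrow> (x + Q, y + Q) \<in> R"
    proof (cases "x \<le> y")
      case True
      have "T1 \<le> x" using xy by (simp add: T'_def)
      then show ?thesis using T1(1) True by blast
    next
      case False
      have "T2 \<le> y" "y \<le> x" using xy False by (auto simp: T'_def)
      then have "(y,x) \<in> R\<inverse> \<longleftrightarrow> (y+Q, x+Q) \<in> R\<inverse>" using T2(1) by blast
      then show ?thesis by simp
    qed
  next
    fix x y assume "x + T' \<le> y"
    then have "x + T1 \<le> y" by (simp add: T'_def)
    then show "(x, y) \<in> R \<longleftrightarrow> (x, y + Q) \<in> R" using T1(2) by blast
  next
    fix x y assume "y + T' \<le> x"
    then have "y + T2 \<le> x" by (simp add: T'_def)
    then have "(y,x) \<in> R\<inverse> \<longleftrightarrow> (y, x+Q) \<in> R\<inverse>" using T2(2) by blast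
    then show "(x, y) \<in> R \<longleftrightarrow> (x + Q, y) \<in> R" by simp
  qed
  then show ?thesis unfolding R_def by blast
qed

lemma Epb_trancl:
  fixes \<phi> :: "unit list \<Rightarrow> 'b"
  assumes R: "\<forall>xs\<in>R. set xs \<subseteq> range \<phi>"
  shows "Epb \<phi> (trancl_rel R) = (Epb \<phi> R)\<^sup>+"
proof -
  define \<psi> where "\<psi> m = \<phi> (replicate m ())" for m
  define Rb where "Rb = {(u, v). [u, v] \<in> R}"
  have tr: "[u, v] \<in> trancl_rel R \<longleftrightarrow> (u, v) \<in> Rb\<^sup>+" for u v
    by (auto simp: trancl_rel_def Rb_def)
  have c1: "(\<psi> m, \<psi> n) \<in> Rb\<^sup>+" if "(m, n) \<in> (Epb \<phi> R)\<^sup>+" for m n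
    using that
  proof (induction rule: trancl_induct)
    case (base y) then show ?case by (auto simp: Epb_def Rb_def \<psi>_def)
  next
    case (step y z)
    have "(\<psi> y, \<psi> z) \<in> Rb" using step(2) by (auto simp: Epb_def Rb_def \<psi>_def)
    then show ?case using step(3) by (rule trancl_into_trancl[rotated])
  qed
  have c2: "\<forall>n. v = \<psi> n \<longrightarrow> (m, n) \<in> (Epb \<phi> R)\<^sup>+" if "(\<psi> m, v) \<in> Rb\<^sup>+" for m v
    using that
  proof (induction rule: trancl_induct)
    case (base y)
    then show ?case by (auto simp: Epb_def Rb_def \<psi>_def)
  next
    case (step y z)
    have "[y, z] \<in> R" using step(2) by (simp add: Rb_def)
    then have "y \<in> range \<phi>" using R by auto
    then obtain u where u: "y = \<phi> u" by blast
    have yu: "y = \<psi> (length u)" using u unit_list_rep[of u] by (simp add: \<psi>_def)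
    have IH: "(m, length u) \<in> (Epb \<phi> R)\<^sup>+" using step(3) yu by blast
    show ?case
    proof (intro allI impI)
      fix n assume "z = \<psi> n"
      then have "(length u, n) \<in> Epb \<phi> R" using \<open>[y, z] \<in> R\<close> yu by (simp add: Epb_def \<psi>_def)
      with IH show "(m, n) \<in> (Epb \<phi> R)\<^sup>+" by (rule trancl_into_trancl)
    qed
  qed
  show ?thesis
  proof (rule set_eqI, clarify)
    fix m n
    have "(m, n) \<in> Epb \<phi> (trancl_rel R) \<longleftrightarrow> (\<psi> m, \<psi> n) \<in> Rb\<^sup>+"
      by (simp add: Epb_def \<psi>_def tr)
    also have "\<dots> \<longleftrightarrow> (m, n) \<in> (Epb \<phi> R)\<^sup>+" using c1 c2 by blast
    finally show "(m, n) \<in> Epb \<phi> (trancl_rel R) \<longleftrightarrow> (m, n) \<in> (Epb \<phi> R)\<^sup>+" .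
  qed
qed

theorem theorem4p6:
  fixes S :: "'b set" and Rs :: "(nat \<times> 'b list set) list"
    and \<phi> :: "unit list \<Rightarrow> 'b" and R :: "'b list set"
  assumes "rel_structure S Rs"
    and "injective_unary_fa_presentation S Rs \<phi>"
    and "(2, R) \<in> set Rs"
  shows "regular_rel (Lambda (UNIV :: unit list set) \<phi> 2 (trancl_rel R))
         \<and> unary_fa_presentable S (Rs @ [(2, trancl_rel R)])"
proof -
  have fa: "fa_presentation S Rs (UNIV :: unit list set) \<phi>"
    using assms(2) by (simp add: injective_unary_fa_presentation_def)
  have img: "\<phi> ` UNIV = S" using fa by (simp add: fa_presentation_def)
  have regR: "regular_rel (Lambda (UNIV :: unit list set) \<phi> 2 R)"
    using fa assms(3) unfolding fa_presentation_def by auto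
  have Rsub: "\<forall>xs\<in>R. set xs \<subseteq> range \<phi>"
    using assms(1) assms(3) img unfolding rel_structure_def by fastforce
  have "regular (Lg (Epb \<phi> R))" using regR by (simp add: regular_rel_def conv_Lambda)
  then obtain T P where "nice T P (Epb \<phi> R)" using regular_nice by blast
  then obtain T' Q where "nice T' Q ((Epb \<phi> R)\<^sup>+)" using trancl_nice by blast
  then have "regular (Lg ((Epb \<phi> R)\<^sup>+))" by (rule nice_regular)
  then have new: "regular_rel (Lambda (UNIV :: unit list set) \<phi> 2 (trancl_rel R))"
    by (simp add: regular_rel_def conv_Lambda Epb_trancl[OF Rsub])
  have "fa_presentation S (Rs @ [(2, trancl_rel R)]) (UNIV :: unit list set) \<phi>"
    using fa new unfolding fa_presentation_def by auto
  then have "unary_fa_presentable S (Rs @ [(2, trancl_rel R)])"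
    unfolding unary_fa_presentable_def by blast
  with new show ?thesis by blast
qed

end
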